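(* Let $k\in\mathbb{N}$ and $n=3k+1$. Then $D_{\mathrm{lin}}(\mathrm{MINCUT}_n)\ge 2n-2$; that is, any deterministic linear query algorithm that correctly computes the minimum cut weight of every $n$-vertex weighted undirected graph must make at least $2n-2$ linear queries in the worst case.
   Context: An $n$-vertex weighted undirected graph $G=(V,w)$ is given by a vector $w\in\mathbb{R}_{\ge 0}^{\binom{n}{2}}$ assigning a nonnegative weight to each unordered pair of distinct vertices; for $\emptyset\ne X\subsetneq V$ the cut $\Delta(X)$ has weight equal to the sum of $w$ over pairs with exactly one endpoint in $X$. In $\mathrm{MINCUT}_n$ the input is such a graph and the required output is the minimum weight of a cut. A linear query is a vector $x\in\mathbb{R}^{\binom n2}$ and is answered by $\langle x,w\rangle$; queries may be chosen adaptively. $D_{\mathrm{lin}}(\mathrm{MINCUT}_n)$ is the minimum, over deterministic linear query algorithms that output the correct answer on every $n$-vertex weighted graph, of the maximum over inputs of the number of queries made. *)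

theory Defs
  imports Complex_Main
begin

text \<open>Vertices of an n-vertex graph are 0,...,n-1. Unordered pairs {i,j} of distinct
vertices are represented by ordered pairs (i,j) with i < j < n.\<close>

definition Pairs :: "nat \<Rightarrow> (nat \<times> nat) set" where
  "Pairs n = {(i, j). i < j \<and> j < n}"

text \<open>A weighted n-vertex graph: a nonnegative weight on each pair (zero off the pairs,
so that the weight vector is exactly an element of R^(n choose 2)).\<close>

definition wgraph :: "nat \<Rightarrow> (nat \<times> nat \<Rightarrow> real) \<Rightarrow> bool" where
  "wgraph n w \<longleftrightarrow> (\<forall>p \<in> Pairs n. 0 \<le> w p) \<and> (\<forall>p. p \<notin> Pairs n \<longrightarrow> w p = 0)"

definition cut_weight :: "nat \<Rightarrow> (nat \<times> nat \<Rightarrow> real) \<Rightarrow> nat set \<Rightarrow> real" where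
  "cut_weight n w X = (\<Sum>p \<in> Pairs n. if (fst p \<in> X) \<noteq> (snd p \<in> X) then w p else 0)"

definition mincut :: "nat \<Rightarrow> (nat \<times> nat \<Rightarrow> real) \<Rightarrow> real" where
  "mincut n w = Min {cut_weight n w X | X. X \<noteq> {} \<and> X \<subset> {..<n}}"

definition lin_query :: "nat \<Rightarrow> (nat \<times> nat \<Rightarrow> real) \<Rightarrow> (nat \<times> nat \<Rightarrow> real) \<Rightarrow> real" where
  "lin_query n x w = (\<Sum>p \<in> Pairs n. x p * w p)"

text \<open>Deterministic adaptive linear query algorithms = decision trees: either output a
value, or ask a linear query and continue depending on the answer.\<close>

datatype qtree = Out real | Ask "nat \<times> nat \<Rightarrow> real" "real \<Rightarrow> qtree"

primrec run :: "nat \<Rightarrow> qtree \<Rightarrow> (nat \<times> nat \<Rightarrow> real) \<Rightarrow> real" where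
  "run n (Out r) w = r"
| "run n (Ask x f) w = run n (f (lin_query n x w)) w"

primrec num_queries :: "nat \<Rightarrow> qtree \<Rightarrow> (nat \<times> nat \<Rightarrow> real) \<Rightarrow> nat" where
  "num_queries n (Out r) w = 0"
| "num_queries n (Ask x f) w = Suc (num_queries n (f (lin_query n x w)) w)"

end

theory Submission imports Defs begin

definition blk :: "nat \<Rightarrow> (nat\<times>nat) set" where
  "blk i = {(0,3*i+1),(0,3*i+2),(0,3*i+3),(3*i+1,3*i+2),(3*i+1,3*i+3),(3*i+2,3*i+3)}"
definition SS :: "nat \<Rightarrow> (nat\<times>nat) set" where "SS k = (\<Union>i<k. blk i)"
definition w0 :: "nat \<Rightarrow> nat\<times>nat \<Rightarrow> real" where "w0 k = (\<lambda>p. if p \<in> SS k then 1 else 0)"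

lemma blk_sum: "(\<Sum>p\<in>blk i. g p) = g (0,3*i+1) + g (0,3*i+2) + g(0,3*i+3) + g(3*i+1,3*i+2) + g(3*i+1,3*i+3) + g(3*i+2,3*i+3)"
  by (simp add: blk_def algebra_simps)

lemma finite_blk[simp]: "finite (blk i)" by (simp add: blk_def)
lemma card_blk: "card (blk i) = 6" by (simp add: blk_def)

lemma blk_disj: "i \<noteq> j \<Longrightarrow> blk i \<inter> blk j = {}"
  by (auto simp: blk_def)

lemma finite_SS[simp]: "finite (SS k)" by (simp add: SS_def)

lemma card_SS: "card (SS k) = 6 * k"
proof -
  have "card (SS k) = (\<Sum>i<k. card (blk i))"
    unfolding SS_def by (rule card_UN_disjoint) (auto simp: blk_disj)
  then show ?thesis by (simp add: card_blk)
qed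

lemma SS_Pairs: "n = 3*k+1 \<Longrightarrow> SS k \<subseteq> Pairs n"
  by (auto simp: SS_def blk_def Pairs_def)

lemma finite_Pairs[simp]: "finite (Pairs n)"
proof -
  have "Pairs n \<subseteq> {..<n} \<times> {..<n}" by (auto simp: Pairs_def)
  then show ?thesis by (rule finite_subset) auto
qed

definition bc :: "nat set \<Rightarrow> (nat\<times>nat \<Rightarrow> real) \<Rightarrow> nat \<Rightarrow> real" where
  "bc X w i = (\<Sum>p\<in>blk i. if (fst p \<in> X) \<noteq> (snd p \<in> X) then w p else 0)"

lemma cut_decomp:
  assumes n: "n = 3*k+1" and z: "\<forall>p. p \<notin> SS k \<longrightarrow> w p = 0"
  shows "cut_weight n w X = (\<Sum>i<k. bc X w i)"
proof -
  let ?f = "\<lambda>p. if (fst p \<in> X) \<noteq> (snd p \<in> X) then w p else 0"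
  have "cut_weight n w X = (\<Sum>p\<in>SS k. ?f p)"
    unfolding cut_weight_def
    by (rule sum.mono_neutral_right[OF finite_Pairs SS_Pairs[OF n]]) (use z in auto)
  also have "\<dots> = (\<Sum>i<k. \<Sum>p\<in>blk i. ?f p)"
    unfolding SS_def by (rule sum.UNION_disjoint) (auto simp: blk_disj)
  finally show ?thesis by (simp add: bc_def)
qed

lemma cut_local:
  assumes n: "n = 3*k+1" and z: "\<forall>p. p \<notin> SS k \<longrightarrow> w p = 0" and i: "i < k"
    and X: "X \<subseteq> {3*i+1,3*i+2,3*i+3}"
  shows "cut_weight n w X = bc X w i"
proof -
  have "bc X w j = 0" if "j \<noteq> i" for j
  proof -
    have "0 \<notin> X" using X by auto
    moreover have "3*j+1 \<notin> X" "3*j+2 \<notin> X" "3*j+3 \<notin> X" using X \<open>j\<noteq>i\<close> by auto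
    ultimately show ?thesis unfolding bc_def blk_sum by simp
  qed
  then have "(\<Sum>j<k. bc X w j) = bc X w i"
    using i by (simp add: sum.remove[of "{..<k}" i])
  then show ?thesis using cut_decomp[OF n z] by simp
qed

lemma w0_zero: "\<forall>p. p \<notin> SS k \<longrightarrow> w0 k p = 0" by (simp add: w0_def)

lemma blk_in_SS: "i < k \<Longrightarrow> p \<in> blk i \<Longrightarrow> p \<in> SS k" by (auto simp: SS_def)

lemma w0_blk: "i < k \<Longrightarrow> w0 k (0,3*i+1) = 1 \<and> w0 k (0,3*i+2) = 1 \<and> w0 k (0,3*i+3) = 1 \<and>
   w0 k (3*i+1,3*i+2) = 1 \<and> w0 k (3*i+1,3*i+3) = 1 \<and> w0 k (3*i+2,3*i+3) = 1"
  using blk_in_SS[of i k] by (auto simp: w0_def blk_def)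

lemma bc_nonneg: "(\<forall>p. 0 \<le> w p) \<Longrightarrow> 0 \<le> bc X w i"
  unfolding bc_def by (intro sum_nonneg) auto

lemma k4: "\<not> ((b1 = (a0::bool)) \<and> (b2 = a0) \<and> (b3 = a0)) \<Longrightarrow>
  (3::real) \<le> (if a0 \<noteq> b1 then 1 else 0) + (if a0 \<noteq> b2 then 1 else 0) + (if a0 \<noteq> b3 then 1 else 0)
   + (if b1 \<noteq> b2 then 1 else 0) + (if b1 \<noteq> b3 then 1 else 0) + (if b2 \<noteq> b3 then 1 else 0)"
  by (cases a0; cases b1; cases b2; cases b3; simp)

lemma cut_lower:
  assumes n: "n = 3*k+1" and X: "X \<noteq> {}" "X \<subset> {..<n}"
  shows "3 \<le> cut_weight n (w0 k) X"
proof -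
  obtain a where a: "a \<in> X" using X by auto
  obtain b where b: "b < n" "b \<notin> X" using X by auto
  have "\<exists>i<k. \<not> ((3*i+1 \<in> X \<longleftrightarrow> 0 \<in> X) \<and> (3*i+2 \<in> X \<longleftrightarrow> 0 \<in> X) \<and> (3*i+3 \<in> X \<longleftrightarrow> 0 \<in> X))"
  proof (rule ccontr)
    assume H: "\<not> ?thesis"
    have all: "v \<in> X \<longleftrightarrow> 0 \<in> X" if "v < n" for v
    proof (cases "v = 0")
      case False
      define i where "i = (v - 1) div 3"
      have ik: "i < k" using that False n by (simp add: i_def)
      have e: "v = 3*i + (v-1) mod 3 + 1" using False unfolding i_def by simp
      have "(v-1) mod 3 < 3" by simp
      then have "v = 3*i+1 \<or> v = 3*i+2 \<or> v = 3*i+3" using e by arith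
      then show ?thesis using H ik by auto
    qed simp
    have "a < n" using a X by auto
    then show False using all[of a] all[OF b(1)] a b by simp
  qed
  then obtain i where i: "i < k" and ne: "\<not> ((3*i+1 \<in> X \<longleftrightarrow> 0 \<in> X) \<and> (3*i+2 \<in> X \<longleftrightarrow> 0 \<in> X) \<and> (3*i+3 \<in> X \<longleftrightarrow> 0 \<in> X))"
    by blast
  have eq: "bc X (w0 k) i = (if (0\<in>X) \<noteq> (3*i+1\<in>X) then 1 else 0) + (if (0\<in>X) \<noteq> (3*i+2\<in>X) then 1 else 0)
     + (if (0\<in>X) \<noteq> (3*i+3\<in>X) then 1 else 0) + (if (3*i+1\<in>X) \<noteq> (3*i+2\<in>X) then 1 else 0)
     + (if (3*i+1\<in>X) \<noteq> (3*i+3\<in>X) then 1 else 0) + (if (3*i+2\<in>X) \<noteq> (3*i+3\<in>X) then 1 else 0)"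
    unfolding bc_def blk_sum using w0_blk[OF i] by simp
  have "3 \<le> bc X (w0 k) i" unfolding eq by (rule k4) (use ne in blast)
  also have "bc X (w0 k) i \<le> (\<Sum>j<k. bc X (w0 k) j)"
    by (rule member_le_sum) (use i in \<open>auto intro: bc_nonneg simp: w0_def\<close>)
  also have "\<dots> = cut_weight n (w0 k) X" using cut_decomp[OF n w0_zero] by simp
  finally show ?thesis .
qed

lemma finite_cuts: "finite {cut_weight n w X | X. X \<noteq> {} \<and> X \<subset> {..<n}}"
proof -
  have "{cut_weight n w X | X. X \<noteq> {} \<and> X \<subset> {..<n}} \<subseteq> (cut_weight n w) ` Pow {..<n}" by blast
  then show ?thesis by (rule finite_subset) simp
qed

lemma mincut_le: "X \<noteq> {} \<Longrightarrow> X \<subset> {..<n} \<Longrightarrow> mincut n w \<le> cut_weight n w X"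
  unfolding mincut_def by (rule Min_le[OF finite_cuts]) blast

lemma mincut_w0: assumes n: "n = 3*k+1" and k: "k \<ge> 1" shows "3 \<le> mincut n (w0 k)"
proof -
  have ne: "{cut_weight n (w0 k) X | X. X \<noteq> {} \<and> X \<subset> {..<n}} \<noteq> {}"
  proof -
    have "(1::nat) < n" using n k by simp
    then have "{0::nat} \<noteq> {} \<and> {0} \<subset> {..<n}" by (auto simp: psubset_eq)
    then show ?thesis by blast
  qed
  show ?thesis unfolding mincut_def
  proof (subst Min_ge_iff[OF finite_cuts ne], intro ballI)
    fix a assume "a \<in> {cut_weight n (w0 k) X | X. X \<noteq> {} \<and> X \<subset> {..<n}}"
    then obtain X where "a = cut_weight n (w0 k) X" "X \<noteq> {}" "X \<subset> {..<n}" by blast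
    then show "3 \<le> a" using cut_lower[OF n] by simp
  qed
qed

primrec qlist :: "nat \<Rightarrow> qtree \<Rightarrow> (nat \<times> nat \<Rightarrow> real) \<Rightarrow> (nat \<times> nat \<Rightarrow> real) list" where
  "qlist n (Out r) w = []"
| "qlist n (Ask x f) w = x # qlist n (f (lin_query n x w)) w"

lemma len_qlist: "length (qlist n T w) = num_queries n T w"
  by (induction T) auto

lemma run_same: "(\<forall>x\<in>set (qlist n T w). lin_query n x w' = lin_query n x w) \<Longrightarrow> run n T w' = run n T w"
  by (induction T) auto

lemma elim:
  fixes xs :: "('a \<Rightarrow> real) list"
  assumes "finite S" "length xs < card S"
  shows "\<exists>d. (\<forall>p. p \<notin> S \<longrightarrow> d p = 0) \<and> (\<exists>p\<in>S. d p \<noteq> 0) \<and> (\<forall>x\<in>set xs. (\<Sum>p\<in>S. x p * d p) = 0)"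
  using assms
proof (induction "length xs" arbitrary: xs S)
  case 0
  then have xs: "xs = []" by simp
  from 0 obtain p where p: "p \<in> S" by (metis card.empty card_gt_0_iff ex_in_conv)
  show ?case by (rule exI[of _ "\<lambda>q. if q = p then 1 else 0"]) (use p xs in auto)
next
  case (Suc m)
  then obtain x xs' where xs: "xs = x # xs'" and lm: "length xs' = m" by (cases xs) auto
  have prems: "finite S" "Suc (length xs') < card S" using Suc.prems xs by auto
  show ?case
  proof (cases "\<forall>p\<in>S. x p = 0")
    case True
    obtain d where d: "(\<forall>p. p \<notin> S \<longrightarrow> d p = 0) \<and> (\<exists>p\<in>S. d p \<noteq> 0) \<and> (\<forall>x\<in>set xs'. (\<Sum>p\<in>S. x p * d p) = 0)"
      using Suc.hyps(1)[of xs' S] lm prems by auto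
    show ?thesis by (rule exI[of _ d]) (use d True xs in auto)
  next
    case False
    then obtain p0 where p0: "p0 \<in> S" "x p0 \<noteq> 0" by auto
    define S' where "S' = S - {p0}"
    have cS': "card S' = card S - 1" using p0 prems by (simp add: S'_def)
    define ys where "ys = map (\<lambda>y p. y p - (y p0 / x p0) * x p) xs'"
    have lys: "length ys = m" using lm by (simp add: ys_def)
    have "length ys < card S'" using prems cS' lm lys by simp
    then obtain d' where d': "\<forall>p. p \<notin> S' \<longrightarrow> d' p = 0" "\<exists>p\<in>S'. d' p \<noteq> 0"
        "\<forall>y\<in>set ys. (\<Sum>p\<in>S'. y p * d' p) = 0"
      using Suc.hyps(1)[of ys S'] lys prems by (auto simp: S'_def)
    define d where "d = d'(p0 := - (\<Sum>p\<in>S'. x p * d' p) / x p0)"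
    have p0S': "p0 \<notin> S'" by (simp add: S'_def)
    have split: "(\<Sum>p\<in>S. z p * d p) = z p0 * d p0 + (\<Sum>p\<in>S'. z p * d' p)" for z
    proof -
      have "(\<Sum>p\<in>S. z p * d p) = z p0 * d p0 + (\<Sum>p\<in>S'. z p * d p)"
        using sum.remove[OF prems(1) p0(1), of "\<lambda>p. z p * d p"] by (simp add: S'_def)
      also have "(\<Sum>p\<in>S'. z p * d p) = (\<Sum>p\<in>S'. z p * d' p)"
        by (rule sum.cong) (use p0S' in \<open>auto simp: d_def\<close>)
      finally show ?thesis .
    qed
    have hx: "(\<Sum>p\<in>S. x p * d p) = 0" unfolding split using p0(2) by (simp add: d_def)
    have hy: "(\<Sum>p\<in>S. y p * d p) = 0" if y: "y \<in> set xs'" for y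
    proof -
      have "(\<Sum>p\<in>S'. (y p - (y p0 / x p0) * x p) * d' p) = 0" using d'(3) y by (auto simp: ys_def)
      then have "(\<Sum>p\<in>S'. y p * d' p) - (y p0 / x p0) * (\<Sum>p\<in>S'. x p * d' p) = 0"
        by (simp add: algebra_simps sum_subtractf sum_distrib_left)
      then show ?thesis unfolding split using p0(2) by (simp add: d_def field_simps)
    qed
    show ?thesis
    proof (intro exI[of _ d] conjI)
      show "\<forall>p. p \<notin> S \<longrightarrow> d p = 0" using d'(1) p0 by (auto simp: d_def S'_def)
      show "\<exists>p\<in>S. d p \<noteq> 0" using d'(2) p0S' by (auto simp: d_def S'_def)
      show "\<forall>z\<in>set xs. (\<Sum>p\<in>S. z p * d p) = 0" using hx hy xs by auto
    qed
  qed
qed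

lemma lq_lin: "lin_query n x (\<lambda>p. w p + c * d p) = lin_query n x w + c * lin_query n x d"
  unfolding lin_query_def by (simp add: algebra_simps sum.distrib sum_distrib_left)

lemma arith6:
  fixes a1 a2 a3 b12 b13 b23 :: real
  assumes "\<And>c::real. c \<in> {1,-1} \<Longrightarrow> 3 \<le> 3 + c*(a1+b12+b13) \<and> 3 \<le> 3 + c*(a2+b12+b23) \<and> 3 \<le> 3 + c*(a3+b13+b23)
     \<and> 3 \<le> 3 + c*(a1+a2+a3) \<and> 3 \<le> 4 + c*(a1+a2+b13+b23) \<and> 3 \<le> 4 + c*(a1+a3+b12+b23) \<and> 3 \<le> 4 + c*(a2+a3+b12+b13)"
  shows "\<bar>a1\<bar> \<le> 1/2 \<and> \<bar>a2\<bar> \<le> 1/2 \<and> \<bar>a3\<bar> \<le> 1/2 \<and> \<bar>b12\<bar> \<le> 1/2 \<and> \<bar>b13\<bar> \<le> 1/2 \<and> \<bar>b23\<bar> \<le> 1/2"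
proof -
  from assms[of 1] have A1: "0 \<le> a1+b12+b13" and A2: "0 \<le> a2+b12+b23" and A3: "0 \<le> a3+b13+b23"
    and A4: "0 \<le> a1+a2+a3" and A5: "-1 \<le> a1+a2+b13+b23" and A6: "-1 \<le> a1+a3+b12+b23" and A7: "-1 \<le> a2+a3+b12+b13"
    by auto
  from assms[of "-1"] have B1: "a1+b12+b13 \<le> 0" and B2: "a2+b12+b23 \<le> 0" and B3: "a3+b13+b23 \<le> 0"
    and B4: "a1+a2+a3 \<le> 0" and B5: "a1+a2+b13+b23 \<le> 1" and B6: "a1+a3+b12+b23 \<le> 1" and B7: "a2+a3+b12+b13 \<le> 1"
    by auto
  have s1: "a1+b12+b13 = 0" using A1 B1 by linarith
  have s2: "a2+b12+b23 = 0" using A2 B2 by linarith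
  have s3: "a3+b13+b23 = 0" using A3 B3 by linarith
  have s4: "a1+a2+a3 = 0" using A4 B4 by linarith
  have e1: "a1 = b23" using s1 s2 s3 s4 by linarith
  have e2: "a2 = b13" using s1 s2 s3 s4 by linarith
  have e3: "a3 = b12" using s1 s2 s3 s4 by linarith
  have f12: "\<bar>b12\<bar> \<le> 1/2" using A5 B5 s1 s2 unfolding abs_le_iff by linarith
  have f13: "\<bar>b13\<bar> \<le> 1/2" using A6 B6 s1 s3 unfolding abs_le_iff by linarith
  have f23: "\<bar>b23\<bar> \<le> 1/2" using A7 B7 s2 s3 unfolding abs_le_iff by linarith
  show ?thesis using e1 e2 e3 f12 f13 f23 by simp
qed

lemma block_bound:
  fixes d :: "nat\<times>nat \<Rightarrow> real"
  assumes n: "n = 3*k+1" and i: "i < k" and dz: "\<forall>p. p \<notin> SS k \<longrightarrow> d p = 0"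
    and cut3: "\<And>c X. c \<in> {1,-1} \<Longrightarrow> X \<noteq> {} \<Longrightarrow> X \<subset> {..<n} \<Longrightarrow> 3 \<le> cut_weight n (\<lambda>p. w0 k p + c * d p) X"
    and p: "p \<in> blk i"
  shows "\<bar>d p\<bar> \<le> 1/2"
proof -
  let ?u = "3*i+1" and ?v = "3*i+2" and ?w = "3*i+3"
  have z: "\<forall>p. p \<notin> SS k \<longrightarrow> w0 k p + c * d p = 0" for c using dz by (simp add: w0_def)
  have valid: "X \<noteq> {} \<and> X \<subset> {..<n}" if "X \<subseteq> {?u,?v,?w}" "X \<noteq> {}" for X
  proof -
    have "X \<subseteq> {..<n}" using that i n by auto
    moreover have "0 \<notin> X" using that by auto
    moreover have "0 < n" using n by simp
    ultimately show ?thesis using that(2) by auto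
  qed
  have C: "3 \<le> bc X (\<lambda>p. w0 k p + c * d p) i" if "c \<in> {1,-1}" "X \<subseteq> {?u,?v,?w}" "X \<noteq> {}" for c X
  proof -
    have "3 \<le> cut_weight n (\<lambda>p. w0 k p + c * d p) X"
      using cut3[OF that(1)] valid[OF that(2,3)] by blast
    then show ?thesis using cut_local[OF n z[of c] i that(2)] by linarith
  qed
  have ne: "?u \<noteq> ?v" "?u \<noteq> ?w" "?v \<noteq> ?w" "?u \<noteq> 0" "?v \<noteq> 0" "?w \<noteq> 0" by auto
  have "\<bar>d (0,?u)\<bar> \<le> 1/2 \<and> \<bar>d (0,?v)\<bar> \<le> 1/2 \<and> \<bar>d (0,?w)\<bar> \<le> 1/2 \<and> \<bar>d (?u,?v)\<bar> \<le> 1/2 \<and> \<bar>d (?u,?w)\<bar> \<le> 1/2 \<and> \<bar>d (?v,?w)\<bar> \<le> 1/2"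
  proof (rule arith6)
    fix c :: real assume c: "c \<in> {1,-1}"
    note W = w0_blk[OF i]
    have 1: "3 \<le> bc {?u} (\<lambda>p. w0 k p + c * d p) i" by (rule C[OF c]) auto
    have 2: "3 \<le> bc {?v} (\<lambda>p. w0 k p + c * d p) i" by (rule C[OF c]) auto
    have 3: "3 \<le> bc {?w} (\<lambda>p. w0 k p + c * d p) i" by (rule C[OF c]) auto
    have 4: "3 \<le> bc {?u,?v,?w} (\<lambda>p. w0 k p + c * d p) i" by (rule C[OF c]) auto
    have 5: "3 \<le> bc {?u,?v} (\<lambda>p. w0 k p + c * d p) i" by (rule C[OF c]) auto
    have 6: "3 \<le> bc {?u,?w} (\<lambda>p. w0 k p + c * d p) i" by (rule C[OF c]) auto
    have 7: "3 \<le> bc {?v,?w} (\<lambda>p. w0 k p + c * d p) i" by (rule C[OF c]) auto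
    show "3 \<le> 3 + c*(d (0,?u)+d (?u,?v)+d (?u,?w)) \<and> 3 \<le> 3 + c*(d (0,?v)+d (?u,?v)+d (?v,?w)) \<and> 3 \<le> 3 + c*(d (0,?w)+d (?u,?w)+d (?v,?w))
     \<and> 3 \<le> 3 + c*(d (0,?u)+d (0,?v)+d (0,?w)) \<and> 3 \<le> 4 + c*(d (0,?u)+d (0,?v)+d (?u,?w)+d (?v,?w)) \<and> 3 \<le> 4 + c*(d (0,?u)+d (0,?w)+d (?u,?v)+d (?v,?w)) \<and> 3 \<le> 4 + c*(d (0,?v)+d (0,?w)+d (?u,?v)+d (?u,?w))"
      using 1 2 3 4 5 6 7 unfolding bc_def blk_sum using W by (simp add: algebra_simps)
  qed
  then show ?thesis using p unfolding blk_def by auto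
qed

theorem theorem3:
  fixes k n :: nat and T :: qtree
  assumes "n = 3 * k + 1"
    and "\<forall>w. wgraph n w \<longrightarrow> run n T w = mincut n w"
  shows "\<exists>w. wgraph n w \<and> num_queries n T w \<ge> 2 * n - 2"
proof (cases "k = 0")
  case True
  then have "n = 1" using assms(1) by simp
  moreover have "wgraph n (\<lambda>_. 0)" by (simp add: wgraph_def)
  ultimately show ?thesis by auto
next
  case False
  then have k: "k \<ge> 1" by simp
  note n = assms(1)
  have wg0: "wgraph n (w0 k)" unfolding wgraph_def using SS_Pairs[OF n] by (auto simp: w0_def)
  show ?thesis
  proof (rule ccontr)
    assume "\<not> ?thesis"
    then have short: "num_queries n T (w0 k) < 6 * k" using wg0 n by auto
    define xs where "xs = qlist n T (w0 k)"
    have "length xs < card (SS k)" using short by (simp add: xs_def len_qlist card_SS)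
    then obtain d where dz: "\<forall>p. p \<notin> SS k \<longrightarrow> d p = 0" and dnz: "\<exists>p\<in>SS k. d p \<noteq> 0"
      and dort: "\<forall>x\<in>set xs. (\<Sum>p\<in>SS k. x p * d p) = 0"
      using elim[OF finite_SS] by blast
    define m where "m = Max ((\<lambda>p. \<bar>d p\<bar>) ` SS k)"
    have SSne: "SS k \<noteq> {}" using dnz by auto
    have "m \<in> (\<lambda>p. \<bar>d p\<bar>) ` SS k" unfolding m_def by (rule Max_in) (use SSne in auto)
    then obtain p0 where p0: "p0 \<in> SS k" "\<bar>d p0\<bar> = m" by auto
    have le_m: "\<bar>d p\<bar> \<le> m" if "p \<in> SS k" for p using that by (auto simp: m_def)
    have mpos: "m > 0" using dnz le_m by force
    define d' where "d' = (\<lambda>p. d p / d p0)"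
    have dp0: "d p0 \<noteq> 0" using p0 mpos by auto
    have d'p0: "d' p0 = 1" using dp0 by (simp add: d'_def)
    have d'z: "\<forall>p. p \<notin> SS k \<longrightarrow> d' p = 0" using dz by (simp add: d'_def)
    have d'b: "\<bar>d' p\<bar> \<le> 1" for p
    proof (cases "p \<in> SS k")
      case True
      have a: "\<bar>d p\<bar> \<le> \<bar>d p0\<bar>" using le_m[OF True] p0 by simp
      have b: "0 < \<bar>d p0\<bar>" using dp0 by simp
      show ?thesis using a b by (simp add: d'_def abs_divide)
    next
      case False
      then have "d p = 0" using dz by blast
      then show ?thesis by (simp add: d'_def)
    qed
    have lq0: "lin_query n x d' = 0" if "x \<in> set xs" for x
    proof -
      have "lin_query n x d' = (\<Sum>p\<in>SS k. x p * d' p)"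
        unfolding lin_query_def
        by (rule sum.mono_neutral_right[OF finite_Pairs SS_Pairs[OF n]]) (use d'z in auto)
      also have "\<dots> = (\<Sum>p\<in>SS k. x p * d p) / d p0"
        by (simp add: d'_def sum_divide_distrib)
      finally show ?thesis using dort that by simp
    qed
    have cut3: "3 \<le> cut_weight n (\<lambda>p. w0 k p + c * d' p) X"
      if c: "c \<in> {1,-1}" and X: "X \<noteq> {}" "X \<subset> {..<n}" for c X
    proof -
      let ?w = "\<lambda>p. w0 k p + c * d' p"
      have wg: "wgraph n ?w" unfolding wgraph_def
      proof (intro conjI ballI allI impI)
        fix p assume "p \<in> Pairs n"
        show "0 \<le> ?w p"
        proof (cases "p \<in> SS k")
          case True
          have "\<bar>c * d' p\<bar> \<le> 1" using c d'b[of p] by (auto simp: abs_mult)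
          then show ?thesis using True by (simp add: w0_def abs_le_iff)
        next
          case False
          then have "d' p = 0" using d'z by blast
          then show ?thesis using False by (simp add: w0_def)
        qed
      next
        fix p assume "p \<notin> Pairs n"
        then have "p \<notin> SS k" using SS_Pairs[OF n] by auto
        moreover from this have "d' p = 0" using d'z by blast
        ultimately show "?w p = 0" by (simp add: w0_def)
      qed
      have "run n T ?w = run n T (w0 k)"
        by (rule run_same) (use lq0 in \<open>simp add: lq_lin xs_def\<close>)
      then have "mincut n ?w = mincut n (w0 k)" using assms(2) wg wg0 by simp
      then have "3 \<le> mincut n ?w" using mincut_w0[OF n k] by simp
      also have "\<dots> \<le> cut_weight n ?w X" by (rule mincut_le[OF X])
      finally show ?thesis .
    qed
    obtain i where i: "i < k" "p0 \<in> blk i" using p0(1) by (auto simp: SS_def)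
    have "\<bar>d' p0\<bar> \<le> 1/2" by (rule block_bound[OF n i(1) d'z cut3 i(2)])
    then show False using d'p0 by simp
  qed
qed

end
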